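(* For any fixed $m$, any fixed $k<m$ and any fixed $p\in(0,1)$, with $P\sim(\mathrm{IC}_p)^n$, $$\Pr(\mathrm{CORE}(P)=\mathcal A_k)=1-\exp(-\Theta(n))\quad\text{and}\quad\Pr(\mathrm{EJR{+}}(P)=\mathcal A_k)=1-\exp(-\Theta(n)).$$
   Context: $\mathcal A=[m]$, $\mathcal A_k$ the $k$-subsets. $\mathrm{IC}_p$ is the distribution over $2^{\mathcal A}$ in which each alternative is independently included with probability $p$; $P=(A_1,\dots,A_n)$ has i.i.d. ballots from $\mathrm{IC}_p$. $W\in\mathrm{CORE}(P)$ iff for every nonempty $N'\subseteq[n]$ and $W'\subseteq\mathcal A$ with $|W'|/k\le|N'|/n$ some $j\in N'$ has $|A_j\cap W'|\le|A_j\cap W|$. $W\in\mathrm{EJR{+}}(P)$ iff there are no $a\in\mathcal A\setminus W$, $\ell\ge1$, $N'\subseteq[n]$ with $|N'|\ge\ell n/k$ such that every $j\in N'$ has $a\in A_j$ and $|A_j\cap W|<\ell$. Asymptotics as $n\to\infty$. *)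

theory Defs
  imports "HOL-Probability.Probability"
begin

text \<open>Alternatives: [m] = {1..m}. Voters: [n], indexed as {0..<n}.
  A profile is a function from voters to ballots (approval sets).\<close>

definition alts :: "nat \<Rightarrow> nat set" where
  "alts m = {1..m}"

definition committees :: "nat \<Rightarrow> nat \<Rightarrow> nat set set" where
  "committees m k = {W. W \<subseteq> alts m \<and> card W = k}"

definition IC :: "real \<Rightarrow> nat \<Rightarrow> nat set pmf" where
  "IC p m = map_pmf (\<lambda>f. {a \<in> alts m. f a}) (Pi_pmf (alts m) False (\<lambda>_. bernoulli_pmf p))"

definition profile_pmf :: "real \<Rightarrow> nat \<Rightarrow> nat \<Rightarrow> (nat \<Rightarrow> nat set) pmf" where
  "profile_pmf p m n = Pi_pmf {..<n} {} (\<lambda>_. IC p m)"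

definition CORE :: "nat \<Rightarrow> nat \<Rightarrow> nat \<Rightarrow> (nat \<Rightarrow> nat set) \<Rightarrow> nat set set" where
  "CORE m k n P = {W \<in> committees m k.
     \<forall>N' W'. N' \<subseteq> {..<n} \<longrightarrow> N' \<noteq> {} \<longrightarrow> W' \<subseteq> alts m \<longrightarrow>
       real (card W') / real k \<le> real (card N') / real n \<longrightarrow>
       (\<exists>j\<in>N'. card (P j \<inter> W') \<le> card (P j \<inter> W))}"

definition EJR_plus :: "nat \<Rightarrow> nat \<Rightarrow> nat \<Rightarrow> (nat \<Rightarrow> nat set) \<Rightarrow> nat set set" where
  "EJR_plus m k n P = {W \<in> committees m k.
     \<not> (\<exists>a \<in> alts m - W. \<exists>l::nat. l \<ge> 1 \<and> (\<exists>N' \<subseteq> {..<n}.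
          real (card N') \<ge> real l * real n / real k \<and>
          (\<forall>j\<in>N'. a \<in> P j \<and> card (P j \<inter> W) < l)))}"

end

theory Submission
  imports Defs
begin

lemma finite_alts[simp]: "finite (alts m)" by (simp add: alts_def)

lemma IC_sym:
  assumes inv: "\<And>x. \<sigma> (\<sigma> x) = x" and pres: "\<And>x. \<sigma> x \<in> alts m \<longleftrightarrow> x \<in> alts m"
  shows "measure_pmf.prob (IC p m) {A. Q (\<sigma> ` A)} = measure_pmf.prob (IC p m) {A. Q A}"
proof -
  let ?Pi = "Pi_pmf (alts m) False (\<lambda>_. bernoulli_pmf p)"
  have bij: "bij_betw \<sigma> (alts m) (alts m)"
    by (rule bij_betwI[of _ _ _ \<sigma>]) (auto simp: pres inv)
  have Pi: "?Pi = map_pmf (\<lambda>g. g \<circ> \<sigma>) ?Pi"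
    by (rule Pi_pmf_bij_betw) (auto simp: bij pres)
  have seteq: "\<sigma> ` {a\<in>alts m. g a} = {a\<in>alts m. g (\<sigma> a)}" for g :: "nat \<Rightarrow> bool"
  proof (intro set_eqI iffI)
    fix x assume "x \<in> \<sigma> ` {a\<in>alts m. g a}"
    then show "x \<in> {a\<in>alts m. g (\<sigma> a)}" using inv pres by auto
  next
    fix x assume "x \<in> {a\<in>alts m. g (\<sigma> a)}"
    then have "\<sigma> x \<in> {a\<in>alts m. g a}" using pres by auto
    then show "x \<in> \<sigma> ` {a\<in>alts m. g a}" using inv by (metis image_eqI)
  qed
  have "map_pmf ((`) \<sigma>) (IC p m) = map_pmf (\<lambda>g. {a\<in>alts m. g (\<sigma> a)}) ?Pi"
    unfolding IC_def by (simp add: pmf.map_comp o_def seteq)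
  also have "\<dots> = map_pmf (\<lambda>g. {a\<in>alts m. g a}) (map_pmf (\<lambda>g. g \<circ> \<sigma>) ?Pi)"
    by (simp add: pmf.map_comp o_def)
  also have "\<dots> = IC p m" unfolding IC_def using Pi by simp
  finally have M: "map_pmf ((`) \<sigma>) (IC p m) = IC p m" .
  have "measure_pmf.prob (IC p m) {A. Q (\<sigma> ` A)} = measure_pmf.prob (map_pmf ((`) \<sigma>) (IC p m)) {A. Q A}"
    by (simp add: measure_map_pmf vimage_def)
  also have "\<dots> = measure_pmf.prob (IC p m) {A. Q A}" using M by simp
  finally show ?thesis .
qed

lemma cover_sum:
  fixes M :: "'a pmf" and S :: "'i \<Rightarrow> 'a set"
  assumes fin: "finite I" and cov: "\<And>x. card {i\<in>I. x \<in> S i} \<le> L"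
  shows "(\<Sum>i\<in>I. measure_pmf.prob M (S i)) \<le> real L"
proof -
  have "(\<Sum>i\<in>I. measure_pmf.prob M (S i)) = (\<Sum>i\<in>I. measure_pmf.expectation M (indicator (S i)))"
    by simp
  also have "\<dots> = measure_pmf.expectation M (\<lambda>x. \<Sum>i\<in>I. indicator (S i) x)"
    by (rule Bochner_Integration.integral_sum[symmetric])
       (auto intro!: measure_pmf.integrable_const_bound[where B=1] simp: indicator_def)
  also have "\<dots> = measure_pmf.expectation M (\<lambda>x. real (card {i\<in>I. x \<in> S i}))"
  proof (rule Bochner_Integration.integral_cong[OF refl])
    fix x
    have "(\<Sum>i\<in>I. indicator (S i) x :: real) = (\<Sum>i\<in>{i\<in>I. x \<in> S i}. 1)"
      using fin by (intro sum.mono_neutral_cong_right) (auto simp: indicator_def)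
    then show "(\<Sum>i\<in>I. indicator (S i) x :: real) = real (card {i\<in>I. x \<in> S i})" by simp
  qed
  also have "\<dots> \<le> real L"
    by (rule measure_pmf.integral_le_const)
       (auto intro!: measure_pmf.integrable_const_bound[where B="real L"] simp: cov)
  finally show ?thesis .
qed

lemma swap_lemmas:
  fixes a b :: nat
  defines "\<sigma> \<equiv> (\<lambda>x. if x = a then b else if x = b then a else x)"
  assumes "a \<in> alts m" "b \<in> alts m"
  shows "\<And>x. \<sigma> (\<sigma> x) = x" "\<And>x. \<sigma> x \<in> alts m \<longleftrightarrow> x \<in> alts m"
  using assms by auto

lemma ejr_bound:
  assumes W: "W \<subseteq> alts m" "card W = k" and a: "a \<in> alts m" "a \<notin> W" and l: "1 \<le> l" and k: "1 \<le> k"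
  shows "measure_pmf.prob (IC p m) {A. a \<in> A \<and> card (A \<inter> W) < l} < real l / real k"
proof -
  define U where "U = insert a W"
  define E where "E b = {A. b \<in> A \<and> card (A \<inter> U) \<le> l}" for b
  have finW: "finite W" using W finite_subset finite_alts by blast
  have finU: "finite U" using finW U_def by simp
  have cardU: "card U = k + 1" using W a finW U_def by simp
  have Ea: "E a = {A. a \<in> A \<and> card (A \<inter> W) < l}"
  proof -
    have "card (A \<inter> U) = Suc (card (A \<inter> W))" if "a \<in> A" for A
    proof -
      have "A \<inter> U = insert a (A \<inter> W)" using that U_def by auto
      then show ?thesis using a finW by simp
    qed
    then show ?thesis unfolding E_def by auto
  qed
  have same: "measure_pmf.prob (IC p m) (E b) = measure_pmf.prob (IC p m) (E a)" if b: "b \<in> U" for b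
  proof -
    define \<sigma> where "\<sigma> = (\<lambda>x::nat. if x = a then b else if x = b then a else x)"
    have bm: "b \<in> alts m" using b U_def a W by auto
    have inv: "\<And>x. \<sigma> (\<sigma> x) = x" and pres: "\<And>x. \<sigma> x \<in> alts m \<longleftrightarrow> x \<in> alts m"
      using swap_lemmas[OF a(1) bm] unfolding \<sigma>_def by auto
    have injs: "inj \<sigma>" by (metis inv injI)
    have sU: "\<sigma> ` U = U" using b unfolding \<sigma>_def U_def by auto
    have key: "(\<sigma> ` A \<in> E b) \<longleftrightarrow> (A \<in> E a)" for A
    proof -
      have 1: "(b \<in> \<sigma> ` A) \<longleftrightarrow> (a \<in> A)"
        by (metis (no_types, lifting) \<sigma>_def image_iff inv)
      have "\<sigma> ` A \<inter> U = \<sigma> ` (A \<inter> U)" using sU injs by (metis image_Int)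
      then have 2: "card (\<sigma> ` A \<inter> U) = card (A \<inter> U)"
        by (metis card_image inj_on_subset injs subset_UNIV)
      show ?thesis unfolding E_def using 1 2 by auto
    qed
    have "measure_pmf.prob (IC p m) (E b) = measure_pmf.prob (IC p m) {A. \<sigma> ` A \<in> E b}"
      using IC_sym[OF inv pres, of p "\<lambda>A. A \<in> E b"] by simp
    also have "{A. \<sigma> ` A \<in> E b} = E a" using key by auto
    finally show ?thesis .
  qed
  have "(\<Sum>b\<in>U. measure_pmf.prob (IC p m) (E b)) \<le> real l"
  proof (rule cover_sum[OF finU])
    fix A
    show "card {b\<in>U. A \<in> E b} \<le> l"
    proof (cases "card (A \<inter> U) \<le> l")
      case True
      have "{b\<in>U. A \<in> E b} = A \<inter> U" using True unfolding E_def by auto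
      then show ?thesis using True by simp
    next
      case False
      then have "{b\<in>U. A \<in> E b} = {}" unfolding E_def by auto
      then show ?thesis by (metis card.empty le0)
    qed
  qed
  also have "(\<Sum>b\<in>U. measure_pmf.prob (IC p m) (E b)) = real (k+1) * measure_pmf.prob (IC p m) (E a)"
    using same cardU by simp
  finally have "real (k+1) * measure_pmf.prob (IC p m) (E a) \<le> real l" .
  then have "measure_pmf.prob (IC p m) (E a) \<le> real l / real (k+1)"
    by (simp add: field_simps)
  also have "\<dots> < real l / real k" using l k by (intro divide_strict_left_mono) auto
  finally show ?thesis using Ea by simp
qed

lemma blocks_exist:
  assumes "finite E" "q * s \<le> card E"
  shows "\<exists>B. (\<forall>i\<in>{1..q}. B i \<subseteq> E \<and> card (B i) = s) \<and>
             (\<forall>i\<in>{1..q}. \<forall>j\<in>{1..q}. i \<noteq> j \<longrightarrow> B i \<inter> B j = {})"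
  using assms
proof (induction q arbitrary: E)
  case 0
  then show ?case by auto
next
  case (Suc q)
  have "s \<le> card E" using Suc.prems by simp
  then obtain C where C: "C \<subseteq> E" "card C = s" by (meson obtain_subset_with_card_n)
  have fC: "finite C" using C Suc.prems(1) finite_subset by blast
  have "card (E - C) = card E - s" using C fC by (simp add: card_Diff_subset)
  then have "q * s \<le> card (E - C)" using Suc.prems by simp
  then obtain B' where B': "\<forall>i\<in>{1..q}. B' i \<subseteq> E - C \<and> card (B' i) = s"
      "\<forall>i\<in>{1..q}. \<forall>j\<in>{1..q}. i \<noteq> j \<longrightarrow> B' i \<inter> B' j = {}"
    using Suc.IH[of "E - C"] Suc.prems(1) by auto
  define B where "B = B'(Suc q := C)"
  have 1: "\<forall>i\<in>{1..Suc q}. B i \<subseteq> E \<and> card (B i) = s"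
    using B' C unfolding B_def by auto
  have 2: "\<forall>i\<in>{1..Suc q}. \<forall>j\<in>{1..Suc q}. i \<noteq> j \<longrightarrow> B i \<inter> B j = {}"
  proof (intro ballI impI)
    fix i j assume i: "i \<in> {1..Suc q}" and j: "j \<in> {1..Suc q}" and ij: "i \<noteq> j"
    show "B i \<inter> B j = {}"
    proof (cases "i = Suc q")
      case True
      then have "j \<in> {1..q}" using j ij by auto
      then show ?thesis using True B' unfolding B_def by auto
    next
      case False
      then have i': "i \<in> {1..q}" using i by auto
      show ?thesis
      proof (cases "j = Suc q")
        case True
        then show ?thesis using i' B' False unfolding B_def by auto
      next
        case False
        then have "j \<in> {1..q}" using j by auto
        then show ?thesis using i' B' ij \<open>i \<noteq> Suc q\<close> False unfolding B_def by auto
      qed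
    qed
  qed
  show ?case using 1 2 by blast
qed

lemma swap_exists:
  assumes "finite D" "D \<inter> B = {}" "card D = card B" "D \<subseteq> alts m" "B \<subseteq> alts m"
  shows "\<exists>\<sigma>::nat\<Rightarrow>nat. (\<forall>x. \<sigma> (\<sigma> x) = x) \<and> (\<forall>x. \<sigma> x \<in> alts m \<longleftrightarrow> x \<in> alts m) \<and>
            \<sigma> ` D = B \<and> \<sigma> ` B = D \<and> (\<forall>x. x \<notin> D \<and> x \<notin> B \<longrightarrow> \<sigma> x = x)"
proof -
  have fB: "finite B" by (rule finite_subset[OF assms(5) finite_alts])
  obtain h where h: "bij_betw h D B" using finite_same_card_bij[OF assms(1) fB assms(3)] by blast
  define \<sigma> where "\<sigma> x = (if x \<in> D then h x else if x \<in> B then inv_into D h x else x)" for x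
  have hB: "x \<in> D \<Longrightarrow> h x \<in> B" for x by (meson bij_betw_apply h)
  have iD: "x \<in> B \<Longrightarrow> inv_into D h x \<in> D" for x using h
    by (metis bij_betw_def inv_into_into)
  have sDx: "x \<in> D \<Longrightarrow> \<sigma> x = h x" for x unfolding \<sigma>_def by simp
  have sBx: "x \<in> B \<Longrightarrow> \<sigma> x = inv_into D h x" for x unfolding \<sigma>_def using assms(2) by auto
  have sOx: "x \<notin> D \<Longrightarrow> x \<notin> B \<Longrightarrow> \<sigma> x = x" for x unfolding \<sigma>_def by simp
  have hinv1: "x \<in> D \<Longrightarrow> inv_into D h (h x) = x" for x
    using h by (meson bij_betw_imp_inj_on inv_into_f_f)
  have hinv2: "x \<in> B \<Longrightarrow> h (inv_into D h x) = x" for x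
    using h by (metis bij_betw_imp_surj_on f_inv_into_f)
  have inv: "\<sigma> (\<sigma> x) = x" for x
  proof (cases "x \<in> D")
    case True
    then show ?thesis using sDx sBx hB hinv1 by simp
  next
    case False
    show ?thesis
    proof (cases "x \<in> B")
      case True
      then show ?thesis using sDx sBx iD hinv2 by simp
    next
      case False
      then show ?thesis using \<open>x \<notin> D\<close> sOx by simp
    qed
  qed
  have pres: "\<sigma> x \<in> alts m \<longleftrightarrow> x \<in> alts m" for x
  proof (cases "x \<in> D")
    case True
    then show ?thesis using sDx hB assms(4,5) by auto
  next
    case False
    show ?thesis
    proof (cases "x \<in> B")
      case True
      then show ?thesis using sBx iD assms(4,5) by auto
    next
      case False
      then show ?thesis using \<open>x \<notin> D\<close> sOx by simp
    qed
  qed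
  have sD: "\<sigma> ` D = B"
  proof -
    have "\<sigma> ` D = h ` D" using sDx by (intro image_cong) auto
    then show ?thesis using h by (simp add: bij_betw_def)
  qed
  have sB: "\<sigma> ` B = D"
  proof -
    have "\<sigma> ` B = \<sigma> ` (\<sigma> ` D)" using sD by simp
    also have "\<dots> = D" using inv by (simp add: image_comp o_def)
    finally show ?thesis .
  qed
  show ?thesis using inv pres sD sB sOx by blast
qed

lemma inv_card_image:
  assumes inv: "\<And>x. \<sigma> (\<sigma> x) = x" and fin: "finite X"
  shows "card (\<sigma> ` A \<inter> X) = card (A \<inter> \<sigma> ` X)"
proof -
  have injs: "inj \<sigma>" by (metis inv injI)
  have "\<sigma> ` A \<inter> X = \<sigma> ` (A \<inter> \<sigma> ` X)"
  proof (intro set_eqI iffI)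
    fix y assume "y \<in> \<sigma> ` A \<inter> X"
    then obtain x where "x \<in> A" "y = \<sigma> x" "\<sigma> x \<in> X" by auto
    then have "x \<in> \<sigma> ` X" using inv by (metis image_eqI)
    then show "y \<in> \<sigma> ` (A \<inter> \<sigma> ` X)" using \<open>x \<in> A\<close> \<open>y = \<sigma> x\<close> by auto
  next
    fix y assume "y \<in> \<sigma> ` (A \<inter> \<sigma> ` X)"
    then show "y \<in> \<sigma> ` A \<inter> X" using inv by auto
  qed
  then show ?thesis by (metis card_image inj_on_subset injs subset_UNIV)
qed

lemma block_bound:
  assumes D: "D \<subseteq> alts m" and E: "E \<subseteq> alts m" and DE: "D \<inter> E = {}"
    and cD: "card D = s" and cE: "card E = r" and s: "1 \<le> s" and sr: "s \<le> r"
  shows "measure_pmf.prob (IC p m) {A. card (A \<inter> E) < card (A \<inter> D)} < real s / real r"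
proof -
  define q where "q = r div s"
  have "0 < r div s" using s sr by (subst div_greater_zero_iff) auto
  then have q1: "1 \<le> q" unfolding q_def by simp
  have dm: "q * s + r mod s = r" unfolding q_def by (rule div_mult_mod_eq)
  have qs: "q * s \<le> r" using dm by linarith
  have "r mod s < s" using s by simp
  moreover have "(q + 1) * s = q * s + s" by simp
  ultimately have rlt: "r < (q + 1) * s" using dm by linarith
  have finE: "finite E" using E finite_subset finite_alts by blast
  have finD: "finite D" using D finite_subset finite_alts by blast
  obtain B' where B': "\<forall>i\<in>{1..q}. B' i \<subseteq> E \<and> card (B' i) = s"
      "\<forall>i\<in>{1..q}. \<forall>j\<in>{1..q}. i \<noteq> j \<longrightarrow> B' i \<inter> B' j = {}"
    using blocks_exist[OF finE, of q s] qs cE by auto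
  define B where "B = B'(0 := D)"
  have B0: "B 0 = D" unfolding B_def by simp
  have Bsub: "B i \<subseteq> alts m" if "i \<in> {0..q}" for i
  proof (cases "i = 0")
    case True then show ?thesis using D B0 by simp
  next
    case False
    then have "i \<in> {1..q}" using that by auto
    then have "B' i \<subseteq> E" using B' by blast
    then show ?thesis using E False unfolding B_def by auto
  qed
  have Bcard: "card (B i) = s" if "i \<in> {0..q}" for i
  proof (cases "i = 0")
    case True then show ?thesis using cD B0 by simp
  next
    case False
    then have "i \<in> {1..q}" using that by auto
    then have "card (B' i) = s" using B' by blast
    then show ?thesis using False unfolding B_def by auto
  qed
  have BE: "B i \<subseteq> E" if "i \<in> {1..q}" for i
    using that B' unfolding B_def by auto
  have Bfin: "finite (B i)" if "i \<in> {0..q}" for i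
    using Bsub[OF that] finite_subset finite_alts by blast
  have Bdisj: "B i \<inter> B j = {}" if "i \<in> {0..q}" "j \<in> {0..q}" "i \<noteq> j" for i j
  proof -
    consider "i = 0" | "j = 0" | "i \<noteq> 0 \<and> j \<noteq> 0" by blast
    then show ?thesis
    proof cases
      case 1
      then have "j \<in> {1..q}" using that by auto
      then show ?thesis using 1 BE DE B0 by blast
    next
      case 2
      then have "i \<in> {1..q}" using that by auto
      then show ?thesis using 2 BE DE B0 by blast
    next
      case 3
      then show ?thesis using that B' unfolding B_def by auto
    qed
  qed
  define F where "F i = {A. \<forall>j\<in>{0..q}. j \<noteq> i \<longrightarrow> card (A \<inter> B j) < card (A \<inter> B i)}" for i
  have sub: "{A. card (A \<inter> E) < card (A \<inter> D)} \<subseteq> F 0"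
  proof
    fix A assume A: "A \<in> {A. card (A \<inter> E) < card (A \<inter> D)}"
    show "A \<in> F 0" unfolding F_def
    proof (intro CollectI ballI impI)
      fix j assume "j \<in> {0..q}" "j \<noteq> 0"
      then have j: "j \<in> {1..q}" by auto
      have "card (A \<inter> B j) \<le> card (A \<inter> E)" using BE[OF j] finE by (intro card_mono) auto
      also have "\<dots> < card (A \<inter> B 0)" using A B0 by simp
      finally show "card (A \<inter> B j) < card (A \<inter> B 0)" .
    qed
  qed
  have same: "measure_pmf.prob (IC p m) (F i) = measure_pmf.prob (IC p m) (F 0)" if i: "i \<in> {1..q}" for i
  proof -
    have i0: "i \<in> {0..q}" using i by auto
    obtain \<sigma> where inv: "\<forall>x. \<sigma> (\<sigma> x) = x" and pres: "\<forall>x. \<sigma> x \<in> alts m \<longleftrightarrow> x \<in> alts m"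
      and sD: "\<sigma> ` D = B i" and sB: "\<sigma> ` B i = D" and fx: "\<forall>x. x \<notin> D \<and> x \<notin> B i \<longrightarrow> \<sigma> x = x"
    proof -
      have d: "D \<inter> B i = {}" using Bdisj[of 0 i] i B0 by auto
      have c: "card D = card (B i)" using Bcard[OF i0] cD by simp
      show ?thesis using swap_exists[OF finD d c D Bsub[OF i0]] that by blast
    qed
    define \<pi> where "\<pi> j = (if j = 0 then i else if j = i then 0 else j)" for j :: nat
    have sBj: "\<sigma> ` B j = B (\<pi> j)" if j: "j \<in> {0..q}" for j
    proof -
      consider "j = 0" | "j = i" | "j \<noteq> 0 \<and> j \<noteq> i" by blast
      then show ?thesis
      proof cases
        case 1 then show ?thesis using sD B0 unfolding \<pi>_def by simp
      next
        case 2 then show ?thesis using sB B0 i unfolding \<pi>_def by auto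
      next
        case 3
        have d1: "B j \<inter> D = {}" using Bdisj[OF j, of 0] 3 B0 by auto
        have d2: "B j \<inter> B i = {}" using Bdisj[OF j i0] 3 by auto
        have "\<sigma> ` B j = B j"
        proof -
          have "\<sigma> ` B j = id ` B j" using fx d1 d2 by (intro image_cong) auto
          then show ?thesis by simp
        qed
        then show ?thesis using 3 unfolding \<pi>_def by simp
      qed
    qed
    have cnt: "card (\<sigma> ` A \<inter> B j) = card (A \<inter> B (\<pi> j))" if j: "j \<in> {0..q}" for A j
      using inv_card_image[of \<sigma> "B j" A] inv Bfin[OF j] sBj[OF j] by auto
    have \<pi>range: "\<pi> j \<in> {0..q}" if "j \<in> {0..q}" for j using that i unfolding \<pi>_def by auto
    have \<pi>inv: "\<pi> (\<pi> j) = j" for j unfolding \<pi>_def using i by auto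
    have \<pi>i: "\<pi> i = 0" unfolding \<pi>_def by simp
    have key: "(\<sigma> ` A \<in> F i) \<longleftrightarrow> (A \<in> F 0)" for A
    proof
      assume H: "\<sigma> ` A \<in> F i"
      show "A \<in> F 0" unfolding F_def
      proof (intro CollectI ballI impI)
        fix j assume j: "j \<in> {0..q}" "j \<noteq> 0"
        have "\<pi> j \<in> {0..q}" "\<pi> j \<noteq> i" using \<pi>range[OF j(1)] j(2) \<pi>inv \<pi>i by (metis)+
        then have "card (\<sigma> ` A \<inter> B (\<pi> j)) < card (\<sigma> ` A \<inter> B i)" using H unfolding F_def by blast
        then show "card (A \<inter> B j) < card (A \<inter> B 0)"
          using cnt[OF \<open>\<pi> j \<in> {0..q}\<close>, of A] cnt[OF i0, of A] \<pi>inv \<pi>i by simp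
      qed
    next
      assume H: "A \<in> F 0"
      show "\<sigma> ` A \<in> F i" unfolding F_def
      proof (intro CollectI ballI impI)
        fix j assume j: "j \<in> {0..q}" "j \<noteq> i"
        have "\<pi> j \<in> {0..q}" "\<pi> j \<noteq> 0" using \<pi>range[OF j(1)] j(2) \<pi>inv \<pi>i by (metis)+
        then have "card (A \<inter> B (\<pi> j)) < card (A \<inter> B 0)" using H unfolding F_def by blast
        then show "card (\<sigma> ` A \<inter> B j) < card (\<sigma> ` A \<inter> B i)"
          using cnt[OF j(1), of A] cnt[OF i0, of A] \<pi>i by simp
      qed
    qed
    have "measure_pmf.prob (IC p m) (F i) = measure_pmf.prob (IC p m) {A. \<sigma> ` A \<in> F i}"
      using IC_sym[of \<sigma> m p "\<lambda>A. A \<in> F i"] inv pres by simp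
    also have "{A. \<sigma> ` A \<in> F i} = F 0" using key by auto
    finally show ?thesis .
  qed
  have "(\<Sum>i\<in>{0..q}. measure_pmf.prob (IC p m) (F i)) \<le> real 1"
  proof (rule cover_sum)
    fix A
    have "\<forall>x\<in>{i\<in>{0..q}. A \<in> F i}. \<forall>y\<in>{i\<in>{0..q}. A \<in> F i}. x = y"
    proof (intro ballI, rule ccontr)
      fix x y assume x: "x \<in> {i\<in>{0..q}. A \<in> F i}" and y: "y \<in> {i\<in>{0..q}. A \<in> F i}" and xy: "x \<noteq> y"
      have "card (A \<inter> B y) < card (A \<inter> B x)" using x y xy unfolding F_def by auto
      moreover have "card (A \<inter> B x) < card (A \<inter> B y)" using x y xy unfolding F_def by auto
      ultimately show False by simp
    qed
    then show "card {i\<in>{0..q}. A \<in> F i} \<le> 1" by (simp add: card_le_Suc0_iff_eq)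
  qed simp
  also have "(\<Sum>i\<in>{0..q}. measure_pmf.prob (IC p m) (F i)) = real (q + 1) * measure_pmf.prob (IC p m) (F 0)"
  proof -
    have "(\<Sum>i\<in>{0..q}. measure_pmf.prob (IC p m) (F i)) = (\<Sum>i\<in>{0..q}. measure_pmf.prob (IC p m) (F 0))"
    proof (intro sum.cong refl)
      fix x assume x: "x \<in> {0..q}"
      show "measure_pmf.prob (IC p m) (F x) = measure_pmf.prob (IC p m) (F 0)"
      proof (cases "x = 0")
        case False
        then have "x \<in> {1..q}" using x by auto
        then show ?thesis by (rule same)
      qed simp
    qed
    then show ?thesis by simp
  qed
  finally have "real (q + 1) * measure_pmf.prob (IC p m) (F 0) \<le> 1" by simp
  then have F0: "measure_pmf.prob (IC p m) (F 0) \<le> 1 / real (q + 1)" by (simp add: field_simps)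
  have "measure_pmf.prob (IC p m) {A. card (A \<inter> E) < card (A \<inter> D)} \<le> measure_pmf.prob (IC p m) (F 0)"
    using sub by (intro measure_pmf.finite_measure_mono) auto
  also have "\<dots> \<le> 1 / real (q + 1)" by (rule F0)
  also have "\<dots> < real s / real r"
  proof -
    have "real r < real (q + 1) * real s" using rlt by (metis of_nat_less_iff of_nat_mult)
    then show ?thesis using s sr by (simp add: field_simps)
  qed
  finally show ?thesis .
qed

lemma core_bound:
  assumes W: "W \<subseteq> alts m" "card W = k" and W': "W' \<subseteq> alts m" "1 \<le> card W'" "card W' \<le> k"
  shows "measure_pmf.prob (IC p m) {A. card (A \<inter> W) < card (A \<inter> W')} < real (card W') / real k"
proof -
  define D where "D = W' - W"
  define E where "E = W - W'"
  define C where "C = W \<inter> W'"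
  have finW: "finite W" using W finite_subset finite_alts by blast
  have finW': "finite W'" using W' finite_subset finite_alts by blast
  have fD: "finite D" "finite E" "finite C" using finW finW' unfolding D_def E_def C_def by auto
  have cW': "card W' = card D + card C"
  proof -
    have "W' = D \<union> C" "D \<inter> C = {}" unfolding D_def C_def by auto
    then show ?thesis using fD by (metis card_Un_disjoint)
  qed
  have cW: "card W = card E + card C"
  proof -
    have "W = E \<union> C" "E \<inter> C = {}" unfolding E_def C_def by auto
    then show ?thesis using fD by (metis card_Un_disjoint)
  qed
  have eqA: "card (A \<inter> W) < card (A \<inter> W') \<longleftrightarrow> card (A \<inter> E) < card (A \<inter> D)" for A
  proof -
    have "A \<inter> W' = (A \<inter> D) \<union> (A \<inter> C)" "(A \<inter> D) \<inter> (A \<inter> C) = {}"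
      unfolding D_def C_def by auto
    then have 1: "card (A \<inter> W') = card (A \<inter> D) + card (A \<inter> C)"
      using fD by (simp add: card_Un_disjoint)
    have "A \<inter> W = (A \<inter> E) \<union> (A \<inter> C)" "(A \<inter> E) \<inter> (A \<inter> C) = {}"
      unfolding E_def C_def by auto
    then have 2: "card (A \<inter> W) = card (A \<inter> E) + card (A \<inter> C)"
      using fD by (simp add: card_Un_disjoint)
    show ?thesis using 1 2 by linarith
  qed
  have sr: "card D \<le> card E" using cW cW' W W' by linarith
  have kpos: "0 < k" using W' by linarith
  show ?thesis
  proof (cases "card D = 0")
    case True
    then have "D = {}" using fD by simp
    then have "{A. card (A \<inter> W) < card (A \<inter> W')} = {}" using eqA by auto
    then show ?thesis using W' kpos by simp
  next
    case False
    have "measure_pmf.prob (IC p m) {A. card (A \<inter> W) < card (A \<inter> W')} =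
          measure_pmf.prob (IC p m) {A. card (A \<inter> E) < card (A \<inter> D)}" using eqA by simp
    also have "\<dots> < real (card D) / real (card E)"
      by (rule block_bound[OF _ _ _ refl refl]) (use False sr W W' in \<open>auto simp: D_def E_def\<close>)
    also have "\<dots> \<le> real (card W') / real k"
    proof -
      have "real (card D) * real (card C) \<le> real (card E) * real (card C)"
        using sr by (intro mult_right_mono) auto
      then have "real (card D) * (real (card E) + real (card C)) \<le> (real (card D) + real (card C)) * real (card E)"
        by (simp add: algebra_simps)
      moreover have "0 < real (card E)" using False sr by simp
      ultimately show ?thesis using cW cW' W kpos by (simp add: field_simps)
    qed
    finally show ?thesis .
  qed
qed

lemma map_IC_bernoulli:
  "map_pmf Q (IC p m) = bernoulli_pmf (measure_pmf.prob (IC p m) {A. Q A})"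
proof (rule pmf_eqI)
  let ?\<mu> = "measure_pmf.prob (IC p m) {A. Q A}"
  have T: "pmf (map_pmf Q (IC p m)) True = ?\<mu>"
    by (simp add: pmf_map vimage_def)
  have r: "0 \<le> ?\<mu>" "?\<mu> \<le> 1" by auto
  fix b :: bool
  show "pmf (map_pmf Q (IC p m)) b = pmf (bernoulli_pmf ?\<mu>) b"
  proof (cases b)
    case True then show ?thesis using T r by simp
  next
    case False then show ?thesis using T r by (simp add: pmf_False_conv_True[of "map_pmf Q (IC p m)"])
  qed
qed

lemma count_tail:
  fixes Q :: "nat set \<Rightarrow> bool"
  assumes n: "0 < n" and \<mu>: "measure_pmf.prob (IC p m) {A. Q A} = \<mu>" and \<beta>: "\<mu> \<le> \<beta>"
  shows "measure_pmf.prob (profile_pmf p m n) {P. \<beta> * real n \<le> real (card {j\<in>{..<n}. Q (P j)})}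
          \<le> exp (- 2 * real n * (\<beta> - \<mu>)\<^sup>2)"
proof -
  have r: "\<mu> \<in> {0..1}" using \<mu> by auto
  have "map_pmf (\<lambda>P. Q \<circ> P) (profile_pmf p m n) = Pi_pmf {..<n} (Q {}) (\<lambda>_. map_pmf Q (IC p m))"
    unfolding profile_pmf_def by (rule Pi_pmf_map[symmetric]) auto
  also have "\<dots> = Pi_pmf {..<n} (Q {}) (\<lambda>_. bernoulli_pmf \<mu>)"
    using map_IC_bernoulli \<mu> by simp
  finally have M: "map_pmf (\<lambda>P. Q \<circ> P) (profile_pmf p m n) = Pi_pmf {..<n} (Q {}) (\<lambda>_. bernoulli_pmf \<mu>)" .
  have B: "binomial_pmf n \<mu> = map_pmf (\<lambda>f. card {x\<in>{..<n}. f x}) (Pi_pmf {..<n} (Q {}) (\<lambda>_. bernoulli_pmf \<mu>))"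
    by (rule binomial_pmf_altdef') (use r in auto)
  have "measure_pmf.prob (profile_pmf p m n) {P. \<beta> * real n \<le> real (card {j\<in>{..<n}. Q (P j)})}
      = measure_pmf.prob (map_pmf (\<lambda>f. card {x\<in>{..<n}. f x}) (map_pmf (\<lambda>P. Q \<circ> P) (profile_pmf p m n)))
          {x. \<beta> * real n \<le> real x}"
    by (simp add: vimage_def)
  also have "\<dots> = measure_pmf.prob (binomial_pmf n \<mu>) {x. \<beta> * real n \<le> real x}"
    using M B by simp
  also have "{x. \<beta> * real n \<le> real x} = {x. real x / real n \<ge> \<mu> + (\<beta> - \<mu>)}"
    using n by (auto simp: field_simps)
  also have "measure_pmf.prob (binomial_pmf n \<mu>) \<dots> \<le> exp (- 2 * real n * (\<beta> - \<mu>)\<^sup>2)"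
    using binomial_distribution.prob_ge'[where n=n and p=\<mu> and \<epsilon>="\<beta> - \<mu>"] r n \<beta>
    by (simp add: binomial_distribution_def)
  finally show ?thesis .
qed

lemma union_tail:
  fixes I :: "'i set" and Q :: "'i \<Rightarrow> nat set \<Rightarrow> bool" and \<beta> :: "'i \<Rightarrow> real"
  assumes fin: "finite I" and lt: "\<And>i. i \<in> I \<Longrightarrow> measure_pmf.prob (IC p m) {A. Q i A} < \<beta> i"
  shows "\<exists>c>0. \<forall>\<^sub>F n in sequentially.
           measure_pmf.prob (profile_pmf p m n) {P. \<exists>i\<in>I. \<beta> i * real n \<le> real (card {j\<in>{..<n}. Q i (P j)})}
             \<le> exp (- c * real n)"
proof (cases "I = {}")
  case True
  then show ?thesis by (intro exI[of _ 1]) auto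
next
  case False
  define \<mu> where "\<mu> i = measure_pmf.prob (IC p m) {A. Q i A}" for i
  define \<delta> where "\<delta> = Min ((\<lambda>i. \<beta> i - \<mu> i) ` I)"
  have \<delta>pos: "0 < \<delta>" unfolding \<delta>_def using fin False lt by (auto simp: \<mu>_def)
  have \<delta>le: "\<delta> \<le> \<beta> i - \<mu> i" if "i \<in> I" for i unfolding \<delta>_def using fin that by auto
  define c where "c = \<delta>\<^sup>2"
  have cpos: "0 < c" using \<delta>pos unfolding c_def by simp
  define N where "N = nat \<lceil>real (card I) / c\<rceil> + 1"
  have ev: "measure_pmf.prob (profile_pmf p m n) {P. \<exists>i\<in>I. \<beta> i * real n \<le> real (card {j\<in>{..<n}. Q i (P j)})}
             \<le> exp (- c * real n)" if nN: "n \<ge> N" for n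
  proof -
    have n: "0 < n" using nN unfolding N_def by simp
    have "real (card I) / c \<le> real n" using nN unfolding N_def by linarith
    then have "real (card I) \<le> c * real n" using cpos by (simp add: field_simps)
    also have "\<dots> \<le> exp (c * real n)" by (meson exp_ge_add_one_self le_add_same_cancel2 order_trans zero_le_one)
    finally have cardle: "real (card I) \<le> exp (c * real n)" .
    have "measure_pmf.prob (profile_pmf p m n) {P. \<exists>i\<in>I. \<beta> i * real n \<le> real (card {j\<in>{..<n}. Q i (P j)})}
       = measure_pmf.prob (profile_pmf p m n) (\<Union>i\<in>I. {P. \<beta> i * real n \<le> real (card {j\<in>{..<n}. Q i (P j)})})"
      by (intro arg_cong[where f="measure_pmf.prob _"]) auto
    also have "\<dots> \<le> (\<Sum>i\<in>I. measure_pmf.prob (profile_pmf p m n) {P. \<beta> i * real n \<le> real (card {j\<in>{..<n}. Q i (P j)})})"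
      by (rule measure_pmf.finite_measure_subadditive_finite) (use fin in auto)
    also have "\<dots> \<le> (\<Sum>i\<in>I. exp (- 2 * real n * c))"
    proof (rule sum_mono)
      fix i assume i: "i \<in> I"
      have "measure_pmf.prob (profile_pmf p m n) {P. \<beta> i * real n \<le> real (card {j\<in>{..<n}. Q i (P j)})}
            \<le> exp (- 2 * real n * (\<beta> i - \<mu> i)\<^sup>2)"
        by (rule count_tail[OF n]) (use lt[OF i] in \<open>auto simp: \<mu>_def\<close>)
      also have "\<dots> \<le> exp (- 2 * real n * c)"
      proof -
        have "\<delta>\<^sup>2 \<le> (\<beta> i - \<mu> i)\<^sup>2" using \<delta>le[OF i] \<delta>pos by (intro power_mono) auto
        then show ?thesis unfolding c_def by (intro exp_mono) (auto intro: mult_left_mono)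
      qed
      finally show "measure_pmf.prob (profile_pmf p m n) {P. \<beta> i * real n \<le> real (card {j\<in>{..<n}. Q i (P j)})}
            \<le> exp (- 2 * real n * c)" .
    qed
    also have "\<dots> = real (card I) * exp (- 2 * real n * c)" by simp
    also have "\<dots> \<le> exp (c * real n) * exp (- 2 * real n * c)"
      using cardle by (intro mult_right_mono) auto
    also have "\<dots> = exp (- c * real n)" by (simp add: exp_add[symmetric] algebra_simps)
    finally show ?thesis .
  qed
  show ?thesis using cpos ev by (intro exI[of _ c]) (auto simp: eventually_sequentially)
qed

lemma lower_event:
  fixes m :: nat and p :: real
  assumes m: "1 \<le> m" and p: "0 < p" "p < 1"
  shows "\<exists>c2>0. \<forall>n. exp (- c2 * real n) \<le> measure_pmf.prob (profile_pmf p m n) {P. \<forall>j\<in>{..<n}. P j = {1}}"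
proof -
  define q0 where "q0 = p * (1 - p) ^ (m - 1)"
  have q0pos: "0 < q0" using p unfolding q0_def by simp
  have q0lt: "q0 < 1"
  proof -
    have "(1 - p) ^ (m - 1) \<le> 1" using p by (intro power_le_one) auto
    then have "q0 \<le> p" unfolding q0_def using p by (simp add: mult_left_le)
    then show ?thesis using p by simp
  qed
  define B where "B x = (if x = 1 then {True} else {False})" for x :: nat
  let ?Pi = "Pi_pmf (alts m) False (\<lambda>_. bernoulli_pmf p)"
  have one: "1 \<in> alts m" using m unfolding alts_def by simp
  have "measure_pmf.prob ?Pi (Pi (alts m) B) = (\<Prod>x\<in>alts m. measure_pmf.prob (bernoulli_pmf p) (B x))"
    by (rule measure_Pi_pmf_Pi) simp
  also have "\<dots> = (\<Prod>x\<in>alts m. if x = 1 then p else 1 - p)"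
    using p by (intro prod.cong refl) (auto simp: B_def measure_pmf_single)
  also have "\<dots> = p * (\<Prod>x\<in>alts m - {1}. 1 - p)"
    using one by (subst prod.remove[of _ 1]) auto
  also have "\<dots> = q0" using one unfolding q0_def by (simp add: alts_def)
  finally have PiB: "measure_pmf.prob ?Pi (Pi (alts m) B) = q0" .
  have "q0 \<le> measure_pmf.prob (IC p m) {{1}}"
  proof -
    have "Pi (alts m) B \<subseteq> (\<lambda>f. {a \<in> alts m. f a}) -` {{1}}"
      using one unfolding B_def Pi_def by auto
    then have "measure_pmf.prob ?Pi (Pi (alts m) B) \<le> measure_pmf.prob ?Pi ((\<lambda>f. {a \<in> alts m. f a}) -` {{1}})"
      by (intro measure_pmf.finite_measure_mono) auto
    then show ?thesis using PiB unfolding IC_def by simp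
  qed
  define c2 where "c2 = - ln q0"
  have c2pos: "0 < c2" unfolding c2_def using q0pos q0lt by simp
  have "exp (- c2 * real n) \<le> measure_pmf.prob (profile_pmf p m n) {P. \<forall>j\<in>{..<n}. P j = {1}}" for n
  proof -
    have "exp (- c2 * real n) = exp (real n * ln q0)" unfolding c2_def by (simp add: mult.commute)
    also have "\<dots> = exp (ln q0) ^ n" by (rule exp_of_nat_mult)
    also have "\<dots> = q0 ^ n" using q0pos by simp
    also have "\<dots> \<le> (measure_pmf.prob (IC p m) {{1}}) ^ n"
      using \<open>q0 \<le> _\<close> q0pos by (intro power_mono) auto
    also have "\<dots> = (\<Prod>j\<in>{..<n}. measure_pmf.prob (IC p m) {{1}})" by simp
    also have "\<dots> = measure_pmf.prob (profile_pmf p m n) (Pi {..<n} (\<lambda>_. {{1}}))"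
      unfolding profile_pmf_def by (rule measure_Pi_pmf_Pi[symmetric]) simp
    also have "Pi {..<n} (\<lambda>_. {{1}}) = {P. \<forall>j\<in>{..<n}. P j = {1}}" by (auto simp: Pi_def)
    finally show ?thesis .
  qed
  then show ?thesis using c2pos by blast
qed

lemma finite_committees: "finite (committees m k)"
  unfolding committees_def by (rule finite_subset[of _ "Pow (alts m)"]) auto

lemma core_bad:
  assumes n: "0 < n" and k: "1 \<le> k" and ne: "CORE m k n P \<noteq> committees m k"
  shows "\<exists>i\<in>{(W, W'). W \<in> committees m k \<and> W' \<subseteq> alts m \<and> 1 \<le> card W' \<and> card W' \<le> k}.
           real (card (snd i)) / real k * real n \<le> real (card {j\<in>{..<n}. card (P j \<inter> fst i) < card (P j \<inter> snd i)})"
proof -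
  have "CORE m k n P \<subseteq> committees m k" unfolding CORE_def by auto
  then obtain W where W: "W \<in> committees m k" "W \<notin> CORE m k n P" using ne by blast
  then obtain N' W' where N': "N' \<subseteq> {..<n}" "N' \<noteq> {}" and W': "W' \<subseteq> alts m"
      and rat: "real (card W') / real k \<le> real (card N') / real n"
      and all: "\<forall>j\<in>N'. card (P j \<inter> W) < card (P j \<inter> W')"
    unfolding CORE_def by (auto simp: not_le)
  have finN: "finite N'" using N' finite_subset by blast
  have finW': "finite W'" using W' finite_subset finite_alts by blast
  obtain j0 where j0: "j0 \<in> N'" using N' by blast
  have "0 < card (P j0 \<inter> W')" using all j0 by fastforce
  then have c1: "1 \<le> card W'" using finW' by (metis One_nat_def Suc_leI card_gt_0_iff card_0_eq inf_bot_right neq0_conv)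
  have "card N' \<le> n" using card_mono[OF _ N'(1)] by simp
  then have "real (card N') / real n \<le> 1" using n by simp
  then have "real (card W') / real k \<le> 1" using rat by linarith
  then have c2: "card W' \<le> k" using k by (simp add: divide_le_eq_1)
  have sub: "N' \<subseteq> {j\<in>{..<n}. card (P j \<inter> W) < card (P j \<inter> W')}" using N' all by auto
  have "real (card W') / real k * real n \<le> real (card N')" using rat n by (simp add: field_simps)
  also have "\<dots> \<le> real (card {j\<in>{..<n}. card (P j \<inter> W) < card (P j \<inter> W')})"
    using card_mono[OF _ sub] by simp
  finally show ?thesis using W(1) W' c1 c2 by (intro bexI[of _ "(W, W')"]) auto
qed

lemma core_upper:
  assumes k: "1 \<le> k"
  shows "\<exists>c>0. \<forall>\<^sub>F n in sequentially.
     1 - measure_pmf.prob (profile_pmf p m n) {P. CORE m k n P = committees m k} \<le> exp (- c * real n)"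
proof -
  define I where "I = {(W, W'). W \<in> committees m k \<and> W' \<subseteq> alts m \<and> 1 \<le> card W' \<and> card W' \<le> k}"
  have fin: "finite I"
    unfolding I_def by (rule finite_subset[of _ "committees m k \<times> Pow (alts m)"]) (auto simp: finite_committees)
  have lt: "measure_pmf.prob (IC p m) {A. card (A \<inter> fst i) < card (A \<inter> snd i)} < real (card (snd i)) / real k"
    if "i \<in> I" for i
    using that unfolding I_def committees_def by (auto intro!: core_bound)
  obtain c where c: "c > 0" and ev: "\<forall>\<^sub>F n in sequentially.
           measure_pmf.prob (profile_pmf p m n) {P. \<exists>i\<in>I. real (card (snd i)) / real k * real n \<le> real (card {j\<in>{..<n}. card (P j \<inter> fst i) < card (P j \<inter> snd i)})}
             \<le> exp (- c * real n)"
    using union_tail[where I=I and Q="\<lambda>i A. card (A \<inter> fst i) < card (A \<inter> snd i)"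
        and \<beta>="\<lambda>i. real (card (snd i)) / real k" and p=p and m=m] fin lt by blast
  have "\<forall>\<^sub>F n in sequentially.
     1 - measure_pmf.prob (profile_pmf p m n) {P. CORE m k n P = committees m k} \<le> exp (- c * real n)"
    using ev eventually_gt_at_top[of 0]
  proof eventually_elim
    case (elim n)
    have "1 - measure_pmf.prob (profile_pmf p m n) {P. CORE m k n P = committees m k}
        = measure_pmf.prob (profile_pmf p m n) (UNIV - {P. CORE m k n P = committees m k})"
      using measure_pmf.prob_compl[of "{P. CORE m k n P = committees m k}" "profile_pmf p m n"] by simp
    also have "\<dots> \<le> measure_pmf.prob (profile_pmf p m n) {P. \<exists>i\<in>I. real (card (snd i)) / real k * real n \<le> real (card {j\<in>{..<n}. card (P j \<inter> fst i) < card (P j \<inter> snd i)})}"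
      using core_bad[OF elim(2) k] unfolding I_def by (intro measure_pmf.finite_measure_mono) auto
    also have "\<dots> \<le> exp (- c * real n)" using elim(1) .
    finally show ?case .
  qed
  then show ?thesis using c by blast
qed

lemma ejr_bad:
  assumes n: "0 < n" and k: "1 \<le> k" and ne: "EJR_plus m k n P \<noteq> committees m k"
  shows "\<exists>i\<in>{(W, a, l). W \<in> committees m k \<and> a \<in> alts m \<and> a \<notin> W \<and> 1 \<le> l \<and> l \<le> k}.
           real (snd (snd i)) / real k * real n \<le> real (card {j\<in>{..<n}. fst (snd i) \<in> P j \<and> card (P j \<inter> fst i) < snd (snd i)})"
proof -
  have "EJR_plus m k n P \<subseteq> committees m k" unfolding EJR_plus_def by auto
  then obtain W where W: "W \<in> committees m k" "W \<notin> EJR_plus m k n P" using ne by blast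
  then obtain a l N' where a: "a \<in> alts m" "a \<notin> W" and l: "1 \<le> l" and N': "N' \<subseteq> {..<n}"
      and big: "real l * real n / real k \<le> real (card N')"
      and all: "\<forall>j\<in>N'. a \<in> P j \<and> card (P j \<inter> W) < l"
    unfolding EJR_plus_def by auto
  have "card N' \<le> n" using card_mono[OF _ N'] by simp
  then have "real l * real n / real k \<le> real n" using big by linarith
  then have "real l / real k * real n \<le> 1 * real n" by simp
  then have "real l / real k \<le> 1" using n by (metis mult_le_cancel_right_pos of_nat_0_less_iff)
  then have lk: "l \<le> k" using k by (simp add: divide_le_eq_1)
  have sub: "N' \<subseteq> {j\<in>{..<n}. a \<in> P j \<and> card (P j \<inter> W) < l}" using N' all by auto
  have "real l / real k * real n \<le> real (card N')" using big by simp
  also have "\<dots> \<le> real (card {j\<in>{..<n}. a \<in> P j \<and> card (P j \<inter> W) < l})"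
    using card_mono[OF _ sub] by simp
  finally show ?thesis using W(1) a l lk by (intro bexI[of _ "(W, a, l)"]) auto
qed

lemma ejr_upper:
  assumes k: "1 \<le> k"
  shows "\<exists>c>0. \<forall>\<^sub>F n in sequentially.
     1 - measure_pmf.prob (profile_pmf p m n) {P. EJR_plus m k n P = committees m k} \<le> exp (- c * real n)"
proof -
  define I where "I = {(W, a, l). W \<in> committees m k \<and> a \<in> alts m \<and> a \<notin> W \<and> 1 \<le> l \<and> l \<le> k}"
  have fin: "finite I"
    unfolding I_def by (rule finite_subset[of _ "committees m k \<times> alts m \<times> {..k}"]) (auto simp: finite_committees)
  have lt: "measure_pmf.prob (IC p m) {A. fst (snd i) \<in> A \<and> card (A \<inter> fst i) < snd (snd i)} < real (snd (snd i)) / real k"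
    if "i \<in> I" for i
    using that k unfolding I_def committees_def by (auto intro!: ejr_bound)
  obtain c where c: "c > 0" and ev: "\<forall>\<^sub>F n in sequentially.
           measure_pmf.prob (profile_pmf p m n) {P. \<exists>i\<in>I. real (snd (snd i)) / real k * real n \<le> real (card {j\<in>{..<n}. fst (snd i) \<in> P j \<and> card (P j \<inter> fst i) < snd (snd i)})}
             \<le> exp (- c * real n)"
    using union_tail[where I=I and Q="\<lambda>i A. fst (snd i) \<in> A \<and> card (A \<inter> fst i) < snd (snd i)"
        and \<beta>="\<lambda>i. real (snd (snd i)) / real k" and p=p and m=m] fin lt by blast
  have "\<forall>\<^sub>F n in sequentially.
     1 - measure_pmf.prob (profile_pmf p m n) {P. EJR_plus m k n P = committees m k} \<le> exp (- c * real n)"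
    using ev eventually_gt_at_top[of 0]
  proof eventually_elim
    case (elim n)
    have "1 - measure_pmf.prob (profile_pmf p m n) {P. EJR_plus m k n P = committees m k}
        = measure_pmf.prob (profile_pmf p m n) (UNIV - {P. EJR_plus m k n P = committees m k})"
      using measure_pmf.prob_compl[of "{P. EJR_plus m k n P = committees m k}" "profile_pmf p m n"] by simp
    also have "\<dots> \<le> measure_pmf.prob (profile_pmf p m n) {P. \<exists>i\<in>I. real (snd (snd i)) / real k * real n \<le> real (card {j\<in>{..<n}. fst (snd i) \<in> P j \<and> card (P j \<inter> fst i) < snd (snd i)})}"
      using ejr_bad[OF elim(2) k] unfolding I_def by (intro measure_pmf.finite_measure_mono) auto
    also have "\<dots> \<le> exp (- c * real n)" using elim(1) .
    finally show ?case .
  qed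
  then show ?thesis using c by blast
qed

lemma W0_committee:
  assumes "1 \<le> k" "k < m"
  shows "{2..k+1} \<in> committees m k"
  using assms unfolding committees_def alts_def by auto

lemma lower_core:
  assumes k: "1 \<le> k" "k < m" and n: "0 < n" and P: "\<forall>j\<in>{..<n}. P j = {1}"
  shows "CORE m k n P \<noteq> committees m k"
proof -
  have "{2..k+1} \<notin> CORE m k n P"
  proof
    assume H: "{2..k+1} \<in> CORE m k n P"
    have "{1} \<subseteq> alts m" using k unfolding alts_def by auto
    moreover have "real (card {1::nat}) / real k \<le> real (card {..<n}) / real n" using k n by simp
    ultimately have "\<exists>j\<in>{..<n}. card (P j \<inter> {1}) \<le> card (P j \<inter> {2..k+1})"
      using H n unfolding CORE_def by blast
    then show False using P by auto
  qed
  then show ?thesis using W0_committee[OF k] by blast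
qed

lemma lower_ejr:
  assumes k: "1 \<le> k" "k < m" and n: "0 < n" and P: "\<forall>j\<in>{..<n}. P j = {1}"
  shows "EJR_plus m k n P \<noteq> committees m k"
proof -
  have "{2..k+1} \<notin> EJR_plus m k n P"
  proof
    assume H: "{2..k+1} \<in> EJR_plus m k n P"
    have a: "(1::nat) \<in> alts m - {2..k+1}" using k unfolding alts_def by auto
    have "real (card {..<n}) \<ge> real (1::nat) * real n / real k" using k n by (simp add: field_simps)
    moreover have "\<forall>j\<in>{..<n}. (1::nat) \<in> P j \<and> card (P j \<inter> {2..k+1}) < 1" using P by auto
    ultimately show False using H a unfolding EJR_plus_def by blast
  qed
  then show ?thesis using W0_committee[OF k] by blast
qed

theorem corollary3:
  fixes m k :: nat and p :: real
  assumes "1 \<le> k" and "k < m" and "0 < p" and "p < 1"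
  shows "(\<exists>c1 c2. 0 < c1 \<and> 0 < c2 \<and> (\<forall>\<^sub>F n in sequentially.
            exp (- c2 * real n) \<le> 1 - measure_pmf.prob (profile_pmf p m n) {P. CORE m k n P = committees m k}
          \<and> 1 - measure_pmf.prob (profile_pmf p m n) {P. CORE m k n P = committees m k} \<le> exp (- c1 * real n)))
       \<and> (\<exists>c1 c2. 0 < c1 \<and> 0 < c2 \<and> (\<forall>\<^sub>F n in sequentially.
            exp (- c2 * real n) \<le> 1 - measure_pmf.prob (profile_pmf p m n) {P. EJR_plus m k n P = committees m k}
          \<and> 1 - measure_pmf.prob (profile_pmf p m n) {P. EJR_plus m k n P = committees m k} \<le> exp (- c1 * real n)))"
proof -
  have m1: "1 \<le> m" using assms by simp
  obtain c2 where c2: "0 < c2" and low: "\<And>n. exp (- c2 * real n) \<le> measure_pmf.prob (profile_pmf p m n) {P. \<forall>j\<in>{..<n}. P j = {1}}"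
    using lower_event[OF m1 assms(3,4)] by blast
  obtain c1 where c1: "0 < c1" and up1: "\<forall>\<^sub>F n in sequentially.
     1 - measure_pmf.prob (profile_pmf p m n) {P. CORE m k n P = committees m k} \<le> exp (- c1 * real n)"
    using core_upper[OF assms(1), of p m] by blast
  obtain c1' where c1': "0 < c1'" and up2: "\<forall>\<^sub>F n in sequentially.
     1 - measure_pmf.prob (profile_pmf p m n) {P. EJR_plus m k n P = committees m k} \<le> exp (- c1' * real n)"
    using ejr_upper[OF assms(1), of p m] by blast
  have A: "\<forall>\<^sub>F n in sequentially.
            exp (- c2 * real n) \<le> 1 - measure_pmf.prob (profile_pmf p m n) {P. CORE m k n P = committees m k}
          \<and> 1 - measure_pmf.prob (profile_pmf p m n) {P. CORE m k n P = committees m k} \<le> exp (- c1 * real n)"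
    using up1 eventually_gt_at_top[of 0]
  proof eventually_elim
    case (elim n)
    have "exp (- c2 * real n) \<le> measure_pmf.prob (profile_pmf p m n) {P. \<forall>j\<in>{..<n}. P j = {1}}" by (rule low)
    also have "\<dots> \<le> measure_pmf.prob (profile_pmf p m n) (UNIV - {P. CORE m k n P = committees m k})"
      using lower_core[OF assms(1,2) elim(2)] by (intro measure_pmf.finite_measure_mono) auto
    also have "\<dots> = 1 - measure_pmf.prob (profile_pmf p m n) {P. CORE m k n P = committees m k}"
      using measure_pmf.prob_compl[of "{P. CORE m k n P = committees m k}" "profile_pmf p m n"] by simp
    finally show ?case using elim(1) by simp
  qed
  have B: "\<forall>\<^sub>F n in sequentially.
            exp (- c2 * real n) \<le> 1 - measure_pmf.prob (profile_pmf p m n) {P. EJR_plus m k n P = committees m k}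
          \<and> 1 - measure_pmf.prob (profile_pmf p m n) {P. EJR_plus m k n P = committees m k} \<le> exp (- c1' * real n)"
    using up2 eventually_gt_at_top[of 0]
  proof eventually_elim
    case (elim n)
    have "exp (- c2 * real n) \<le> measure_pmf.prob (profile_pmf p m n) {P. \<forall>j\<in>{..<n}. P j = {1}}" by (rule low)
    also have "\<dots> \<le> measure_pmf.prob (profile_pmf p m n) (UNIV - {P. EJR_plus m k n P = committees m k})"
      using lower_ejr[OF assms(1,2) elim(2)] by (intro measure_pmf.finite_measure_mono) auto
    also have "\<dots> = 1 - measure_pmf.prob (profile_pmf p m n) {P. EJR_plus m k n P = committees m k}"
      using measure_pmf.prob_compl[of "{P. EJR_plus m k n P = committees m k}" "profile_pmf p m n"] by simp
    finally show ?case using elim(1) by simp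
  qed
  show ?thesis using A B c1 c1' c2 by blast
qed

end
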